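(* Let $h>0$ and $\alpha>2$, and let $\mathrm{P}_{\mathrm{cov}}^{(\mathrm{C})}(\theta,\lambda)$ and $\mathrm{P}_{\mathrm{cov}}^{(\mathrm{S})}(\theta,\lambda)$ be the coverage probabilities for closest-BS association ($\theta>0$) and strongest-BS association ($\theta\ge1$) with BS density $\lambda$ and BS height $h$, given by $$\mathrm{P}_{\mathrm{cov}}^{(\mathrm{C})}(\theta,\lambda)=\frac{1}{\psi(\theta)+1}e^{-\pi\lambda h^2\psi(\theta)},\qquad \mathrm{P}_{\mathrm{cov}}^{(\mathrm{S})}(\theta,\lambda)=2\pi\lambda\int_h^\infty e^{-\pi\lambda h^2\psi(\theta h^{-\alpha}r^\alpha)}\,r\,dr.$$ Then: (i) $\lim_{\lambda\to0}\mathrm{P}_{\mathrm{cov}}^{(\mathrm{C})}(\theta,\lambda)=\frac{1}{\psi(\theta)+1}$; (ii) $\lim_{\lambda\to0}\mathrm{P}_{\mathrm{cov}}^{(\mathrm{S})}(\theta,\lambda)=\frac{\alpha\sin(2\pi/\alpha)}{2\pi\theta^{2/\alpha}}$; (iii) $\lim_{\lambda\to\infty}\mathrm{P}_{\mathrm{cov}}^{(\mathrm{C})}(\theta,\lambda)=\lim_{\lambda\to\infty}\mathrm{P}_{\mathrm{cov}}^{(\mathrm{S})}(\theta,\lambda)=0$.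
   Context: $\psi(z)=\frac{2z}{\alpha-2}\,{}_2F_1\big(1,1-\tfrac{2}{\alpha};2-\tfrac{2}{\alpha};-z\big)$ for $z>0$, with ${}_2F_1$ the Gauss hypergeometric function. Model: a typical user at the origin of $\mathbb{R}^2$ at ground level; BSs form a homogeneous Poisson point process of intensity $\lambda$, all at height $h$; i.i.d. unit-mean exponential fading; pathloss $(r^2+h^2)^{-\alpha/2}$ with $r$ the horizontal distance; noise neglected. Closest-BS association: served by the horizontally nearest BS, coverage $=\Pr[\mathrm{SIR}>\theta]$; strongest-BS association: coverage $=\Pr[\max_x\mathrm{SIR}_x>\theta]$. The values in (i) and (ii) are the coverage probabilities of the corresponding models with $h=0$. *)

theory Defs
  imports "HOL-Analysis.Analysis"
begin

text \<open>Gauss hypergeometric function 2F1(a,b;c;x) for real arguments, given by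
  Euler's integral representation (valid for c > b > 0 and x < 1); this is the
  analytic continuation of the power series to the whole ray x < 1, which is
  needed here since the argument is -z with z > 0 arbitrary.\<close>
definition hyp2F1 :: "real \<Rightarrow> real \<Rightarrow> real \<Rightarrow> real \<Rightarrow> real" where
  "hyp2F1 a b c x =
     Gamma c / (Gamma b * Gamma (c - b)) *
     integral {0..1} (\<lambda>t. t powr (b - 1) * (1 - t) powr (c - b - 1) * (1 - x * t) powr (- a))"

definition psi :: "real \<Rightarrow> real \<Rightarrow> real" where
  "psi \<alpha> z = 2 * z / (\<alpha> - 2) * hyp2F1 1 (1 - 2 / \<alpha>) (2 - 2 / \<alpha>) (- z)"

definition Pcov_C :: "real \<Rightarrow> real \<Rightarrow> real \<Rightarrow> real \<Rightarrow> real" where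
  "Pcov_C \<alpha> h \<theta> lam = 1 / (psi \<alpha> \<theta> + 1) * exp (- pi * lam * h\<^sup>2 * psi \<alpha> \<theta>)"

definition Pcov_S :: "real \<Rightarrow> real \<Rightarrow> real \<Rightarrow> real \<Rightarrow> real" where
  "Pcov_S \<alpha> h \<theta> lam = 2 * pi * lam *
     integral {h..} (\<lambda>r. exp (- pi * lam * h\<^sup>2 * psi \<alpha> (\<theta> * h powr (- \<alpha>) * r powr \<alpha>)) * r)"

end

theory Submission imports Defs "HOL-Real_Asymp.Real_Asymp" begin


lemma K_eq:
  fixes d :: real assumes "0 < d" "d < 1"
  shows "Beta (1 - d) d = pi / sin (pi * d)"
proof -
  have r: "Gamma (complex_of_real d) * Gamma (1 - complex_of_real d) = of_real pi / sin (of_real pi * of_real d)"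
    by (rule Gamma_reflection_complex)
  have a: "Gamma (complex_of_real d) = of_real (Gamma d)" by (rule Gamma_complex_of_real)
  have b: "Gamma (1 - complex_of_real d) = of_real (Gamma (1-d))"
    using Gamma_complex_of_real[of "1-d"] by simp
  have c: "sin (of_real pi * of_real d) = (of_real (sin (pi*d)) :: complex)"
    by (metis of_real_mult sin_of_real)
  have "complex_of_real (Gamma d * Gamma (1 - d)) = complex_of_real (pi / sin (pi * d))"
    using r unfolding a b c by simp
  hence "Gamma d * Gamma (1 - d) = pi / sin (pi * d)" using of_real_eq_iff by blast
  thus ?thesis by (simp add: Beta_def mult.commute)
qed




lemma pw:
  fixes d z t :: real assumes "z > 0" "t > 0"
  shows "(z*t/(1+z*t)) powr (-d) * (1 - z*t/(1+z*t)) powr (d-1) * (z/(1+z*t)^2)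
       = z powr (1-d) * (t powr (-d) / (1+z*t))"
proof -
  define u where "u = 1 + z*t"
  have u: "u > 0" using assms by (simp add: u_def add_pos_pos)
  have e1: "1 - z*t/u = 1/u" using u by (simp add: u_def field_simps)
  have e2: "(z*t/u) powr (-d) = z powr (-d) * t powr (-d) * u powr d"
    using assms u by (simp add: powr_divide powr_mult powr_minus field_simps)
  have e3: "(1/u) powr (d-1) = u powr (1 - d)"
    using u by (simp add: powr_divide powr_minus_divide[symmetric] powr_minus)
  have e4: "u powr d * u powr (1-d) = u" using u by (simp add: powr_add[symmetric])
  have e5: "z powr (-d) * z = z powr (1-d)" using assms
    by (simp add: powr_add[symmetric] powr_minus field_simps)
  have "(z*t/u) powr (-d) * (1 - z*t/u) powr (d-1) * (z/u^2)
      = (z powr (-d) * z) * t powr (-d) * (u powr d * u powr (1-d)) / u^2"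
    unfolding e1 e2 e3 by (simp add: field_simps)
  also have "\<dots> = z powr (1-d) * (t powr (-d) / u)"
    unfolding e4 e5 using u by (simp add: power2_eq_square field_simps)
  finally show ?thesis by (simp add: u_def)
qed




definition bet :: "real \<Rightarrow> real \<Rightarrow> real" where
  "bet d v = v powr (-d) * (1 - v) powr (d - 1)"

lemma bet_int: assumes "0 < d" "d < 1" shows "set_integrable lborel {0..1} (bet d)"
  using integrable_Beta[of "1-d" d] assms unfolding bet_def by simp

lemma bet_integrable_on: assumes "0 < d" "d < 1" "0 \<le> a" "a \<le> b" "b \<le> 1"
  shows "bet d integrable_on {a..b}"
proof -
  have "set_integrable lborel {a..b} (bet d)"
    by (rule set_integrable_subset[OF bet_int[OF assms(1,2)]]) (use assms in auto)
  thus ?thesis by (rule set_borel_integral_eq_integral)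
qed

lemma bet_has_integral: assumes "0 < d" "d < 1"
  shows "(bet d has_integral Beta (1-d) d) {0..1}"
  using has_integral_Beta_real[of "1-d" d] assms unfolding bet_def by simp

lemma subst_lemma:
  fixes d z :: real assumes d: "0 < d" "d < 1" and z: "z > 0"
  shows "(\<lambda>t. z powr (1-d) * (t powr (-d) / (1+z*t))) integrable_on {0..1}"
    and "integral {0..1} (\<lambda>t. z powr (1-d) * (t powr (-d) / (1+z*t))) = integral {0..z/(1+z)} (bet d)"
proof -
  define g where "g t = z*t/(1+z*t)" for t
  define g' where "g' t = z/(1+z*t)^2" for t
  have pos: "1 + z*t > 0" if "t \<in> {0..1}" for t using that z by (simp add: add_pos_nonneg)
  have I: "set_integrable lborel {g 0..g 1} (bet d)"
    by (rule set_integrable_subset[OF bet_int[OF d]]) (use z in \<open>auto simp: g_def\<close>)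
  have D: "(g has_real_derivative g' x) (at x)" if "x \<in> {0..1}" for x
    using pos[OF that] unfolding g_def g'_def
    by (auto intro!: derivative_eq_intros simp: power2_eq_square field_simps)
  have C: "continuous_on {0..1} g'" unfolding g'_def
    using pos by (intro continuous_intros) force
  have N: "g' x \<ge> 0" if "x \<in> {0..1}" for x using z by (simp add: g'_def)
  note S = integral_substitution[OF I D C N]
  have eq: "bet d (g t) * g' t = z powr (1-d) * (t powr (-d) / (1+z*t))" if "t \<in> {0..1}" for t
  proof (cases "t = 0")
    case True thus ?thesis by (simp add: g_def bet_def)
  next
    case False
    with that have "t > 0" by auto
    thus ?thesis using pw[OF z, of t d] by (simp add: g_def g'_def bet_def)
  qed
  have si: "set_integrable lborel {0..1} (\<lambda>t. bet d (g t) * g' t)" using S(1) by simp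
  have e1: "integral {0..1} (\<lambda>t. bet d (g t) * g' t) = integral {g 0..g 1} (bet d)"
  proof -
    have "integral {0..1} (\<lambda>t. bet d (g t) * g' t) = (LINT t:{0..1}|lborel. bet d (g t) * g' t)"
      using set_borel_integral_eq_integral(2)[OF si] by simp
    also have "\<dots> = (LINT t:{g 0..g 1}|lborel. bet d t)"
      using S(2) by (simp add: set_lebesgue_integral_def mult.commute)
    also have "\<dots> = integral {g 0..g 1} (bet d)"
      using set_borel_integral_eq_integral(2)[OF I] by simp
    finally show ?thesis .
  qed
  show "(\<lambda>t. z powr (1-d) * (t powr (-d) / (1+z*t))) integrable_on {0..1}"
    using integrable_eq[OF set_borel_integral_eq_integral(1)[OF si] eq] .
  show "integral {0..1} (\<lambda>t. z powr (1-d) * (t powr (-d) / (1+z*t))) = integral {0..z/(1+z)} (bet d)"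
  proof -
    have "integral {0..1} (\<lambda>t. z powr (1-d) * (t powr (-d) / (1+z*t))) = integral {0..1} (\<lambda>t. bet d (g t) * g' t)"
      by (rule integral_cong) (use eq in auto)
    thus ?thesis using e1 by (simp add: g_def)
  qed
qed




lemma psi_eq:
  fixes a z :: real assumes a: "a > 2" and z: "z > 0"
  shows "psi a z = (2/a) * z powr (2/a) * integral {0..z/(1+z)} (bet (2/a))"
proof -
  define d where "d = 2/a"
  have d: "0 < d" "d < 1" using a by (auto simp: d_def field_simps)
  define B where "B = integral {0..z/(1+z)} (bet d)"
  have i1: "integral {0..1} (\<lambda>t. t powr (1 - 2/a - 1) * (1 - t) powr (2 - 2/a - (1 - 2/a) - 1) * (1 - -z*t) powr (- 1))
      = integral {0..1} (\<lambda>t. t powr (-d) / (1+z*t))"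
  proof (rule integral_spike[of "{1}"])
    fix t :: real assume t: "t \<in> {0..1} - {1}"
    have p: "1 + z*t > 0" using t z by (simp add: add_pos_nonneg)
    have "(1 - -z*t) powr (-1) = 1/(1+z*t)" using p by (simp add: powr_minus powr_one divide_inverse)
    moreover have "(1 - t) powr (2 - 2/a - (1 - 2/a) - 1) = 1" using t by simp
    ultimately show "t powr (-d) / (1+z*t) = t powr (1 - 2/a - 1) * (1 - t) powr (2 - 2/a - (1 - 2/a) - 1) * (1 - -z*t) powr (- 1)"
      by (simp add: d_def)
  qed auto
  have i2: "integral {0..1} (\<lambda>t. t powr (-d) / (1+z*t)) = z powr (d-1) * B"
  proof -
    have "z powr (1-d) * integral {0..1} (\<lambda>t. t powr (-d) / (1+z*t)) = B"
      using subst_lemma(2)[OF d z] integral_mult_right[of "{0..1}" "z powr (1-d)" "\<lambda>t. t powr (-d)/(1+z*t)"]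
      unfolding B_def by metis
    hence "z powr (d-1) * (z powr (1-d) * integral {0..1} (\<lambda>t. t powr (-d) / (1+z*t))) = z powr (d-1) * B"
      by simp
    moreover have "z powr (d-1) * z powr (1-d) = 1" using z by (simp add: powr_add[symmetric])
    ultimately show ?thesis by (simp add: mult.assoc[symmetric])
  qed
  have g: "Gamma (2 - 2/a) / (Gamma (1 - 2/a) * Gamma (2 - 2/a - (1 - 2/a))) = 1 - d"
  proof -
    have "Gamma (2 - 2/a) = Gamma ((1 - d) + 1)" by (simp add: d_def)
    also have "\<dots> = (1-d) * Gamma (1-d)" using d by (intro Gamma_plus1) (auto dest: nonpos_Ints_nonpos)
    finally have "Gamma (2 - 2/a) = (1-d) * Gamma (1-d)" .
    moreover have "Gamma (1 - d) > 0" using d by simp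
    ultimately show ?thesis by (simp add: d_def)
  qed
  have "psi a z = 2 * z / (a - 2) * ((1 - d) * (z powr (d-1) * B))"
    unfolding psi_def hyp2F1_def i1 i2 g by simp
  also have "\<dots> = d * (z * z powr (d-1)) * B" using a by (simp add: d_def field_simps)
  also have "z * z powr (d-1) = z powr d" using z by (simp add: powr_mult_base)
  finally show ?thesis by (simp add: d_def B_def)
qed




lemma tail_int:
  fixes d w :: real assumes d: "0 < d" "d < 1" and w: "0 \<le> w" "w \<le> 1"
  shows "((\<lambda>v. (1 - v) powr (d - 1)) has_integral (1-w) powr d / d) {w..1}"
proof -
  have "((\<lambda>x. x powr (d-1)) has_integral (1-w) powr (d - 1 + 1) / (d - 1 + 1)) (cbox 0 (1-w))"
    using has_integral_powr_from_0[of "d-1" "1-w"] d w by simp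
  from has_integral_affinity[OF this, of "-1" 1]
  have "((\<lambda>x. (- x + 1) powr (d-1)) has_integral (1-w) powr d / d) ((\<lambda>x. - x + 1) ` cbox 0 (1-w))"
    by simp
  moreover have "(\<lambda>x. - x + 1) ` cbox 0 (1-w) = {w..(1::real)}"
  proof -
    have "(\<lambda>x::real. - x + 1) ` {0..1-w} = {w..1}"
    proof
      show "(\<lambda>x::real. - x + 1) ` {0..1-w} \<subseteq> {w..1}" by auto
      show "{w..1} \<subseteq> (\<lambda>x::real. - x + 1) ` {0..1-w}"
      proof
        fix y assume "y \<in> {w..(1::real)}"
        thus "y \<in> (\<lambda>x::real. - x + 1) ` {0..1-w}" by (intro image_eqI[of _ _ "1 - y"]) auto
      qed
    qed
    thus ?thesis by simp
  qed
  ultimately show ?thesis by simp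
qed

lemma bet_ge1: assumes "0 < d" "d < 1" "0 < v" "v < 1" shows "bet d v \<ge> 1"
proof -
  have "v powr (-d) \<ge> 1" using assms by (simp add: powr_minus one_le_inverse_iff powr_le1)
  moreover have "(1 - v) powr (d - 1) \<ge> 1"
  proof -
    have "(1 - v) powr (d - 1) = inverse ((1-v) powr (1 - d))" by (simp add: powr_minus[symmetric])
    moreover have "(1-v) powr (1-d) \<le> 1" "(1-v) powr (1-d) > 0" using assms by (auto intro: powr_le1)
    ultimately show ?thesis by (simp add: one_le_inverse_iff)
  qed
  ultimately show ?thesis unfolding bet_def by (metis mult_mono' dual_order.trans mult_1_left zero_le_one)
qed

lemma bet_nonneg: "bet d v \<ge> 0" unfolding bet_def by simp

lemma B_bounds:
  fixes d w :: real assumes d: "0 < d" "d < 1" and w: "0 < w" "w < 1"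
  shows "integral {0..w} (bet d) \<le> Beta (1-d) d"
    and "integral {0..w} (bet d) \<ge> w/2"
    and "Beta (1-d) d - integral {0..w} (bet d) \<le> w powr (-d) * (1-w) powr d / d"
proof -
  have K: "integral {0..1} (bet d) = Beta (1-d) d" using bet_has_integral[OF d] by (rule integral_unique)
  show "integral {0..w} (bet d) \<le> Beta (1-d) d"
    unfolding K[symmetric]
    by (rule integral_subset_le) (use d w bet_integrable_on bet_nonneg in auto)
  have "integral {w/2..w} (\<lambda>_. 1::real) \<le> integral {w/2..w} (bet d)"
    by (rule integral_le) (use d w bet_integrable_on bet_ge1 in auto)
  moreover have "integral {w/2..w} (bet d) \<le> integral {0..w} (bet d)"
    by (rule integral_subset_le) (use d w bet_integrable_on bet_nonneg in auto)
  ultimately show "integral {0..w} (bet d) \<ge> w/2" using w by simp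
  have c: "integral {0..w} (bet d) + integral {w..1} (bet d) = Beta (1-d) d"
    unfolding K[symmetric] by (rule Henstock_Kurzweil_Integration.integral_combine) (use d w bet_integrable_on in auto)
  have "integral {w..1} (bet d) \<le> integral {w..1} (\<lambda>v. w powr (-d) * (1 - v) powr (d - 1))"
  proof (rule integral_le)
    show "bet d integrable_on {w..1}" using d w bet_integrable_on by auto
    show "(\<lambda>v. w powr (-d) * (1 - v) powr (d - 1)) integrable_on {w..1}"
    proof -
      have "(\<lambda>v. (1 - v) powr (d - 1)) integrable_on {w..1}"
        using tail_int[OF d, of w] w by (auto simp: integrable_on_def)
      from integrable_cmul[OF this, of "w powr (-d)"] show ?thesis by (simp only: real_scaleR_def)
    qed
    fix v assume v: "v \<in> {w..1}"
    have "v powr (-d) \<le> w powr (-d)" using v w d by (intro powr_mono2') auto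
    thus "bet d v \<le> w powr (-d) * (1 - v) powr (d - 1)" unfolding bet_def
      by (intro mult_right_mono) auto
  qed
  also have "\<dots> = w powr (-d) * ((1-w) powr d / d)"
    using tail_int[OF d, of w] w by (simp add: integral_unique)
  finally show "Beta (1-d) d - integral {0..w} (bet d) \<le> w powr (-d) * (1-w) powr d / d"
    using c by simp
qed




lemma psi_bounds:
  fixes a z :: real assumes a: "a > 2" and z: "z > 0"
  shows "psi a z \<le> (2/a) * z powr (2/a) * Beta (1 - 2/a) (2/a)"
    and "psi a z \<ge> (2/a) * z powr (2/a) * Beta (1 - 2/a) (2/a) - 1"
    and "psi a z > 0"
proof -
  define d where "d = 2/a"
  have d: "0 < d" "d < 1" using a by (auto simp: d_def field_simps)
  define w where "w = z/(1+z)"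
  have w: "0 < w" "w < 1" using z by (auto simp: w_def field_simps)
  have P: "psi a z = d * z powr d * integral {0..w} (bet d)"
    using psi_eq[OF a z] by (simp add: d_def w_def)
  note Bb = B_bounds[OF d w]
  have dz: "d * z powr d > 0" using d z by simp
  show "psi a z \<le> (2/a) * z powr (2/a) * Beta (1 - 2/a) (2/a)"
    unfolding P d_def[symmetric] using Bb(1) dz by (simp add: mult_left_mono)
  show "psi a z > 0" unfolding P using Bb(2) dz w by simp
  have ww: "w powr (-d) * (1-w) powr d = z powr (-d)"
  proof -
    have "1 - w = 1/(1+z)" using z by (simp add: w_def field_simps)
    hence "w powr (-d) * (1-w) powr d = (z/(1+z)) powr (-d) * (1/(1+z)) powr d" by (simp add: w_def)
    also have "\<dots> = z powr (-d) * ((1+z) powr d * (1/(1+z)) powr d)"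
      using z by (simp add: powr_divide powr_minus field_simps)
    also have "(1+z) powr d * (1/(1+z)) powr d = 1"
      using z by (simp add: powr_mult[symmetric])
    finally show ?thesis by simp
  qed
  have "d * z powr d * (Beta (1-d) d - integral {0..w} (bet d)) \<le> d * z powr d * (z powr (-d) / d)"
    using Bb(3) dz unfolding ww[symmetric] by (intro mult_left_mono) (auto simp: mult.assoc)
  also have "\<dots> = 1" using d z by (simp add: powr_minus field_simps)
  finally show "psi a z \<ge> (2/a) * z powr (2/a) * Beta (1 - 2/a) (2/a) - 1"
    unfolding P d_def[symmetric] by (simp add: algebra_simps)
qed




lemma psi_cont:
  fixes a :: real assumes a: "a > 2"
  shows "continuous_on {0<..} (psi a)"
proof -
  define d where "d = 2/a"
  have d: "0 < d" "d < 1" using a by (auto simp: d_def field_simps)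
  have cB: "continuous_on {0..1} (\<lambda>x. integral {0..x} (bet d))"
    by (rule indefinite_integral_continuous_1) (use bet_integrable_on[OF d] in auto)
  have cf: "continuous_on {0<..} (\<lambda>z::real. z/(1+z))"
    by (rule continuous_on_divide) (auto intro!: continuous_intros)
  have im: "(\<lambda>z::real. z/(1+z)) ` {0<..} \<subseteq> {0..1}" by auto
  have c2: "continuous_on {0<..} (\<lambda>z::real. integral {0..z/(1+z)} (bet d))"
    using continuous_on_compose2[OF cB cf im] .
  have c3: "continuous_on {0<..} (\<lambda>z::real. d * z powr d * integral {0..z/(1+z)} (bet d))"
  proof -
    have p: "continuous_on {0<..} (\<lambda>z::real. z powr d)"
      by (rule continuous_on_powr') (auto intro: continuous_on_id continuous_on_const)
    show ?thesis by (intro continuous_on_mult continuous_on_const p c2)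
  qed
  have eq: "\<And>z. z \<in> {0<..} \<Longrightarrow> d * z powr d * integral {0..z/(1+z)} (bet d) = psi a z"
    using psi_eq[OF a] by (simp add: d_def)
  show ?thesis using continuous_on_eq[OF c3 eq] by simp
qed




lemma sin_lt_x: fixes x :: real assumes "0 < x" "x < pi" shows "sin x < x"
proof -
  have "sin x = 2 * sin (x/2) * cos (x/2)" using sin_double[of "x/2"] by simp
  moreover have "sin (x/2) \<le> x/2" using assms by (intro sin_x_le_x) auto
  moreover have "sin (x/2) > 0" using assms by (intro sin_gt_zero) auto
  moreover have "cos (x/2) < 1"
  proof -
    have "cos (x/2) < cos 0" using assms by (intro cos_monotone_0_pi) auto
    thus ?thesis by simp
  qed
  ultimately have "2 * sin (x/2) * cos (x/2) < 2 * sin (x/2) * 1"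
    by (intro mult_strict_left_mono) auto
  with \<open>sin x = _\<close> \<open>sin (x/2) \<le> x/2\<close> show ?thesis by linarith
qed

lemma gauss_int:
  fixes b h :: real assumes b: "b > 0" and h: "h \<ge> 0"
  shows "((\<lambda>r. exp (- b * r^2) * r) has_integral exp (- b * h^2) / (2*b)) {h..}"
proof (rule has_integral_to_inf)
  show "(\<lambda>r. exp (- b * r^2) * r) integrable_on {h..y}" for y
    by (intro integrable_continuous_interval continuous_intros)
  show "exp (- b * r^2) * r \<ge> 0" if "r \<ge> h" for r
    using that h by simp
  define F where "F y = - exp (- b * y^2) / (2*b)" for y
  have "((\<lambda>r. exp (- b * r^2) * r) has_integral (F y - F h)) {h..y}" if "h \<le> y" for y
    unfolding F_def using b that
    by (intro fundamental_theorem_of_calculus)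
       (auto intro!: derivative_eq_intros simp flip: has_real_derivative_iff_has_vector_derivative
             simp: field_simps power2_eq_square)
  hence "\<forall>\<^sub>F y in at_top. integral {h..y} (\<lambda>r. exp (- b * r^2) * r) = F y - F h"
    by (meson eventually_at_top_linorderI integral_unique)
  moreover have "((\<lambda>y. F y - F h) \<longlongrightarrow> exp (- b * h^2) / (2*b)) at_top"
    
  proof -
    have "filterlim (\<lambda>y::real. y^2) at_top at_top"
      by (rule filterlim_pow_at_top) (auto intro: filterlim_ident)
    hence "filterlim (\<lambda>y::real. b * y^2) at_top at_top"
      using b by (intro filterlim_tendsto_pos_mult_at_top[OF tendsto_const]) auto
    hence "filterlim (\<lambda>y::real. - b * y^2) at_bot at_top"
      by (simp add: filterlim_uminus_at_bot)
    hence "((\<lambda>y. exp (- b * y^2)) \<longlongrightarrow> 0) at_top"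
      by (rule filterlim_compose[OF exp_at_bot])
    hence "((\<lambda>y. - exp (- b * y^2) / (2*b) + exp (- b * h^2) / (2*b)) \<longlongrightarrow> - 0 / (2*b) + exp (- b * h^2) / (2*b)) at_top"
      by (intro tendsto_intros) (use b in auto)
    thus ?thesis by (simp add: F_def)
  qed
  ultimately show "((\<lambda>y. integral {h..y} (\<lambda>r. exp (- b * r^2) * r)) \<longlongrightarrow> exp (- b * h^2) / (2*b)) at_top"
    by (simp add: filterlim_cong)
qed




lemma PS_bounds:
  fixes a h th lam :: real
  assumes a: "a > 2" and h: "h > 0" and th: "th > 0" and lam: "lam > 0"
  defines "c \<equiv> (2/a) * th powr (2/a) * Beta (1 - 2/a) (2/a)"
  shows "exp (- (pi*lam*c) * h^2) / c \<le> Pcov_S a h th lam"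
    and "Pcov_S a h th lam \<le> exp (pi*lam*h^2) * exp (- (pi*lam*c) * h^2) / c"
proof -
  define d where "d = 2/a"
  have d: "0 < d" "d < 1" using a by (auto simp: d_def field_simps)
  have K: "Beta (1-d) d > 0"
    using K_eq[OF d] d by (auto intro!: divide_pos_pos sin_gt_zero)
  have c: "c > 0" unfolding c_def d_def[symmetric] using K d th by simp
  define b where "b = pi*lam*c"
  have b: "b > 0" using c lam by (simp add: b_def)
  define z where "z r = th * h powr (- a) * r powr a" for r
  define f where "f r = exp (- pi * lam * h\<^sup>2 * psi a (z r)) * r" for r
  define E where "E r = exp (- b * r^2) * r" for r
  have zpos: "z r > 0" if "r \<ge> h" for r using that h th by (simp add: z_def)
  have zd: "h^2 * z r powr (2/a) = th powr (2/a) * r^2" if "r \<ge> h" for r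
  proof -
    have r: "r > 0" using that h by simp
    have "z r powr (2/a) = th powr (2/a) * (h powr (-a)) powr (2/a) * (r powr a) powr (2/a)"
      using th h r by (simp add: z_def powr_mult)
    also have "(h powr (-a)) powr (2/a) = h powr (-2)" using a by (simp add: powr_powr)
    also have "(r powr a) powr (2/a) = r powr 2" using a by (simp add: powr_powr)
    finally have "z r powr (2/a) = th powr (2/a) * h powr (-2) * r powr 2" .
    moreover have "h^2 * h powr (-2) = 1" using h by (simp add: powr_minus powr_realpow)
    moreover have "r powr 2 = r^2" using r by (simp add: powr_realpow)
    ultimately show ?thesis by (simp add: algebra_simps)
  qed
  have hp1: "h^2 * psi a (z r) \<le> c * r^2" if "r \<ge> h" for r
  proof -
    have "h^2 * psi a (z r) \<le> h^2 * ((2/a) * z r powr (2/a) * Beta (1 - 2/a) (2/a))"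
      using psi_bounds(1)[OF a zpos[OF that]] by (intro mult_left_mono) auto
    also have "\<dots> = c * r^2" unfolding c_def using zd[OF that] by (simp add: algebra_simps)
    finally show ?thesis .
  qed
  have hp2: "h^2 * psi a (z r) \<ge> c * r^2 - h^2" if "r \<ge> h" for r
  proof -
    have "h^2 * psi a (z r) \<ge> h^2 * ((2/a) * z r powr (2/a) * Beta (1 - 2/a) (2/a) - 1)"
      using psi_bounds(2)[OF a zpos[OF that]] by (intro mult_left_mono) auto
    moreover have "h^2 * ((2/a) * z r powr (2/a) * Beta (1 - 2/a) (2/a) - 1) = c * r^2 - h^2"
      unfolding c_def using zd[OF that] by (simp add: algebra_simps)
    ultimately show ?thesis by simp
  qed
  have fl: "E r \<le> f r" if "r \<ge> h" for r
  proof -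
    have m: "pi*lam*(h^2*psi a (z r)) \<le> pi*lam*(c*r^2)"
      by (rule mult_left_mono[OF hp1[OF that]]) (use lam in simp)
    have e1: "- pi * lam * h\<^sup>2 * psi a (z r) = - (pi*lam*(h^2*psi a (z r)))" by (simp add: algebra_simps)
    have e2: "- b * r^2 = -(pi*lam*(c*r^2))" by (simp add: b_def algebra_simps)
    have "- b * r^2 \<le> - pi * lam * h\<^sup>2 * psi a (z r)"
      unfolding e1 e2 using m by linarith
    thus ?thesis unfolding E_def f_def using that h by (intro mult_right_mono) auto
  qed
  have fu: "f r \<le> exp (pi*lam*h^2) * E r" if "r \<ge> h" for r
  proof -
    have m: "pi*lam*(c * r^2 - h^2) \<le> pi*lam*(h^2*psi a (z r))"
      by (rule mult_left_mono[OF hp2[OF that]]) (use lam in simp)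
    have e1: "- pi * lam * h\<^sup>2 * psi a (z r) = - (pi*lam*(h^2*psi a (z r)))" by (simp add: algebra_simps)
    have e2: "pi*lam*h^2 + - b * r^2 = -(pi*lam*(c * r^2 - h^2))" by (simp add: b_def algebra_simps)
    have "- pi * lam * h\<^sup>2 * psi a (z r) \<le> pi*lam*h^2 + - b * r^2"
      unfolding e1 e2 using m by linarith
    hence "exp (- pi * lam * h\<^sup>2 * psi a (z r)) \<le> exp (pi*lam*h^2) * exp (- b * r^2)"
      by (simp add: exp_add[symmetric])
    hence "exp (- pi * lam * h\<^sup>2 * psi a (z r)) * r \<le> exp (pi*lam*h^2) * exp (- b * r^2) * r"
      using that h by (intro mult_right_mono) auto
    thus ?thesis unfolding E_def f_def by (simp add: mult.assoc)
  qed
  have GE: "(E has_integral exp (- b * h^2) / (2*b)) {h..}"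
    unfolding E_def using gauss_int[OF b, of h] h by simp
  have GU: "((\<lambda>r. exp (pi*lam*h^2) * E r) has_integral exp (pi*lam*h^2) * (exp (- b * h^2) / (2*b))) {h..}"
    using has_integral_mult_right[OF GE] .
  have cz: "continuous_on {h..} z" unfolding z_def using h
    by (intro continuous_intros) auto
  have cpz: "continuous_on {h..} (\<lambda>r. psi a (z r))"
    by (rule continuous_on_compose2[OF psi_cont[OF a] cz]) (use zpos in auto)
  have cf: "continuous_on {h..} f" unfolding f_def
    by (intro continuous_intros cpz)
  have fm: "f \<in> borel_measurable (lebesgue_on {h..})"
    by (rule continuous_imp_measurable_on_sets_lebesgue[OF cf]) auto
  have fi: "f integrable_on {h..}"
  proof (rule measurable_bounded_by_integrable_imp_integrable[OF fm])
    show "(\<lambda>r. exp (pi*lam*h^2) * E r) integrable_on {h..}" using GU by (auto simp: integrable_on_def)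
    show "norm (f x) \<le> exp (pi*lam*h^2) * E x" if "x \<in> {h..}" for x
      using fu[of x] that h by (simp add: f_def)
  qed auto
  have PS: "Pcov_S a h th lam = 2*pi*lam * integral {h..} f"
    unfolding Pcov_S_def f_def z_def by simp
  have "integral {h..} E \<le> integral {h..} f"
    by (rule integral_le) (use GE fi fl in \<open>auto simp: integrable_on_def\<close>)
  hence "2*pi*lam * integral {h..} E \<le> Pcov_S a h th lam"
    unfolding PS using lam by (intro mult_left_mono) auto
  moreover have "2*pi*lam * integral {h..} E = exp (- b * h^2) / c"
    using integral_unique[OF GE] b lam c by (simp add: b_def field_simps)
  ultimately show "exp (- (pi*lam*c) * h^2) / c \<le> Pcov_S a h th lam" by (simp add: b_def)
  have "integral {h..} f \<le> integral {h..} (\<lambda>r. exp (pi*lam*h^2) * E r)"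
    by (rule integral_le) (use GU fi fu in \<open>auto simp: integrable_on_def\<close>)
  hence "Pcov_S a h th lam \<le> 2*pi*lam * integral {h..} (\<lambda>r. exp (pi*lam*h^2) * E r)"
    unfolding PS using lam by (intro mult_left_mono) auto
  moreover have "2*pi*lam * integral {h..} (\<lambda>r. exp (pi*lam*h^2) * E r) = exp (pi*lam*h^2) * exp (- b * h^2) / c"
    using integral_unique[OF GU] b lam c by (simp add: b_def field_simps)
  ultimately show "Pcov_S a h th lam \<le> exp (pi*lam*h^2) * exp (- (pi*lam*c) * h^2) / c"
    by (simp add: b_def)
qed




lemma exp_lin_to0:
  fixes k :: real assumes "k > 0"
  shows "((\<lambda>lam. exp (- (k * lam))) \<longlongrightarrow> 0) at_top"
proof -
  have "filterlim (\<lambda>lam::real. k * lam) at_top at_top"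
    using assms by (intro filterlim_tendsto_pos_mult_at_top[OF tendsto_const] filterlim_ident) auto
  hence "filterlim (\<lambda>lam::real. - (k * lam)) at_bot at_top"
    by (simp add: filterlim_uminus_at_bot)
  thus ?thesis by (rule filterlim_compose[OF exp_at_bot])
qed

theorem lemma3:
  fixes h \<alpha> :: real
  assumes "h > 0" and "\<alpha> > 2"
  shows "(\<forall>\<theta>>0. ((\<lambda>lam. Pcov_C \<alpha> h \<theta> lam) \<longlongrightarrow> 1 / (psi \<alpha> \<theta> + 1)) (at_right 0))
       \<and> (\<forall>\<theta>\<ge>1. ((\<lambda>lam. Pcov_S \<alpha> h \<theta> lam) \<longlongrightarrow>
              \<alpha> * sin (2 * pi / \<alpha>) / (2 * pi * \<theta> powr (2 / \<alpha>))) (at_right 0))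
       \<and> (\<forall>\<theta>>0. ((\<lambda>lam. Pcov_C \<alpha> h \<theta> lam) \<longlongrightarrow> 0) at_top)
       \<and> (\<forall>\<theta>\<ge>1. ((\<lambda>lam. Pcov_S \<alpha> h \<theta> lam) \<longlongrightarrow> 0) at_top)"
proof (intro conjI allI impI)
  note h = assms(1) and a = assms(2)
  define d where "d = 2/\<alpha>"
  have d: "0 < d" "d < 1" using a by (auto simp: d_def field_simps)
  have Kp: "Beta (1-d) d = pi / sin (pi*d)" using K_eq[OF d] .
  have sp: "sin (pi*d) > 0" using d by (intro sin_gt_zero) auto
  fix \<theta> :: real
  {
    assume th: "\<theta> > 0"
    have "((\<lambda>lam. 1 / (psi \<alpha> \<theta> + 1) * exp (- pi * lam * h\<^sup>2 * psi \<alpha> \<theta>)) \<longlongrightarrow>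
            1 / (psi \<alpha> \<theta> + 1) * exp (- pi * 0 * h\<^sup>2 * psi \<alpha> \<theta>)) (at_right 0)"
      by (intro tendsto_intros)
    thus "((\<lambda>lam. Pcov_C \<alpha> h \<theta> lam) \<longlongrightarrow> 1 / (psi \<alpha> \<theta> + 1)) (at_right 0)"
      by (simp add: Pcov_C_def)
  }
  {
    assume th: "\<theta> > 0"
    have ps: "psi \<alpha> \<theta> > 0" using psi_bounds(3)[OF a th] .
    have k: "pi * h\<^sup>2 * psi \<alpha> \<theta> > 0" using ps h by simp
    have "((\<lambda>lam. 1 / (psi \<alpha> \<theta> + 1) * exp (- ((pi * h\<^sup>2 * psi \<alpha> \<theta>) * lam))) \<longlongrightarrow> 1 / (psi \<alpha> \<theta> + 1) * 0) at_top"
      by (intro tendsto_intros exp_lin_to0 k)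
    moreover have "(\<lambda>lam. 1 / (psi \<alpha> \<theta> + 1) * exp (- ((pi * h\<^sup>2 * psi \<alpha> \<theta>) * lam))) = (\<lambda>lam. Pcov_C \<alpha> h \<theta> lam)"
      by (rule ext) (simp add: Pcov_C_def algebra_simps)
    ultimately show "((\<lambda>lam. Pcov_C \<alpha> h \<theta> lam) \<longlongrightarrow> 0) at_top" by simp
  }
  {
    assume th1: "\<theta> \<ge> 1"
    hence th: "\<theta> > 0" by simp
    define c where "c = (2/\<alpha>) * \<theta> powr (2/\<alpha>) * Beta (1 - 2/\<alpha>) (2/\<alpha>)"
    have c_eq: "c = d * \<theta> powr d * (pi / sin (pi*d))" using Kp by (simp add: c_def d_def)
    have c: "c > 0" unfolding c_eq using d th sp by simp
    have c1: "c > 1"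
    proof -
      have "\<theta> powr d \<ge> 1" using th1 d by (intro ge_one_powr_ge_zero) auto
      moreover have "pi * d > sin (pi*d)" using d by (intro sin_lt_x) auto
      hence "d * (pi / sin (pi*d)) > 1" using sp by (simp add: field_simps)
      ultimately have "\<theta> powr d * (d * (pi / sin (pi*d))) > 1"
        by (smt (verit) mult_le_cancel_right1)
      thus ?thesis unfolding c_eq by (simp add: algebra_simps)
    qed
    have ev0: "eventually (\<lambda>lam::real. lam > 0) (at_right 0)" by (simp add: eventually_at_right_less)
    have evt: "eventually (\<lambda>lam::real. lam > 0) at_top" by (rule eventually_gt_at_top)
    note B1 = PS_bounds(1)[OF a h th, folded c_def]
    note B2 = PS_bounds(2)[OF a h th, folded c_def]
    {
      have L: "((\<lambda>lam. exp (- (pi*lam*c) * h^2) / c) \<longlongrightarrow> exp (- (pi*0*c) * h^2) / c) (at_right 0)"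
        using c by (intro tendsto_intros) auto
      have U: "((\<lambda>lam. exp (pi*lam*h^2) * exp (- (pi*lam*c) * h^2) / c) \<longlongrightarrow> exp (pi*0*h^2) * exp (- (pi*0*c) * h^2) / c) (at_right 0)"
        using c by (intro tendsto_intros) auto
      have "((\<lambda>lam. Pcov_S \<alpha> h \<theta> lam) \<longlongrightarrow> 1 / c) (at_right 0)"
        by (rule tendsto_sandwich[OF eventually_mono[OF ev0 B1] eventually_mono[OF ev0 B2]]) (use L U in simp_all)
      moreover have "1 / c = \<alpha> * sin (2 * pi / \<alpha>) / (2 * pi * \<theta> powr (2 / \<alpha>))"
      proof -
        have "pi * d = 2 * pi / \<alpha>" by (simp add: d_def)
        thus ?thesis unfolding c_eq using a sp th by (simp add: d_def field_simps)
      qed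
      ultimately show "((\<lambda>lam. Pcov_S \<alpha> h \<theta> lam) \<longlongrightarrow> \<alpha> * sin (2 * pi / \<alpha>) / (2 * pi * \<theta> powr (2 / \<alpha>))) (at_right 0)"
        by simp
    }
    {
      have k: "pi * h^2 * (c - 1) > 0" using c1 h by simp
      have "((\<lambda>lam. exp (- ((pi * h^2 * (c - 1)) * lam)) / c) \<longlongrightarrow> 0 / c) at_top"
        by (intro tendsto_intros exp_lin_to0 k) (use c in simp)
      moreover have "(\<lambda>lam. exp (- ((pi * h^2 * (c - 1)) * lam)) / c) = (\<lambda>lam. exp (pi*lam*h^2) * exp (- (pi*lam*c) * h^2) / c)"
        by (rule ext) (simp add: exp_add[symmetric] algebra_simps)
      ultimately have U: "((\<lambda>lam. exp (pi*lam*h^2) * exp (- (pi*lam*c) * h^2) / c) \<longlongrightarrow> 0) at_top" by simp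
      have L0: "eventually (\<lambda>lam. 0 \<le> Pcov_S \<alpha> h \<theta> lam) at_top"
        using evt by eventually_elim (rule order_trans[OF _ B1], use c in simp_all)
      show "((\<lambda>lam. Pcov_S \<alpha> h \<theta> lam) \<longlongrightarrow> 0) at_top"
        by (rule tendsto_sandwich[OF L0 eventually_mono[OF evt B2] tendsto_const U])
    }
  }
qed


end
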